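(* Let $B$ be a finite nonempty subset of $\mathbb{R}/\mathbb{Z}$ and let $C\subseteq B$ satisfy $C-B=B-B$. For $c\in C$ let $b_c^-$ and $b_c^+$ be the smaller and larger neighbours of $c$ in $B$, and let $R^-=\{c-b_c^-: c\in C\}$ and $R^+=\{c-b_c^+: c\in C\}$. Then every element of $B-B$ is a sum (in $\mathbb{R}/\mathbb{Z}$) of elements of $R^-$, and also a sum of elements of $R^+$; that is, $$B-B\subseteq\langle R^-\rangle_{\mathbb{N}_0}=\langle R^+\rangle_{\mathbb{N}_0}.$$
   Context: $X-Y=\{x-y: x\in X, y\in Y\}$. A finite subset of $\mathbb{R}/\mathbb{Z}$ is ordered circularly (anticlockwise around the circle); each point has a smaller neighbour (the point immediately before it) and a larger neighbour (the point immediately after it) in this circular order, where the first point is regarded as coming after the last. For a set $R\subseteq\mathbb{R}/\mathbb{Z}$, $\langle R\rangle_{\mathbb{N}_0}$ denotes the set of all finite sums $\sum_{r\in R} n_r r$ with $n_r\in\mathbb{N}_0=\{0,1,2,\dots\}$. *)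

theory Defs
  imports Complex_Main
begin

text \<open>The circle R/Z is represented by the canonical representatives in [0,1);
  the group operations are taken modulo 1 via frac.\<close>

definition circ_sub :: "real \<Rightarrow> real \<Rightarrow> real" where
  "circ_sub x y = frac (x - y)"

definition circ_setdiff :: "real set \<Rightarrow> real set \<Rightarrow> real set" where
  "circ_setdiff X Y = {circ_sub x y | x y. x \<in> X \<and> y \<in> Y}"

definition gap_up :: "real \<Rightarrow> real \<Rightarrow> real" where
  "gap_up c b = (if b = c then 1 else frac (b - c))"

definition gap_down :: "real \<Rightarrow> real \<Rightarrow> real" where
  "gap_down c b = (if b = c then 1 else frac (c - b))"

definition larger_nb :: "real set \<Rightarrow> real \<Rightarrow> real" where
  "larger_nb B c = (THE b. b \<in> B \<and> (\<forall>b'\<in>B. gap_up c b \<le> gap_up c b'))"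

definition smaller_nb :: "real set \<Rightarrow> real \<Rightarrow> real" where
  "smaller_nb B c = (THE b. b \<in> B \<and> (\<forall>b'\<in>B. gap_down c b \<le> gap_down c b'))"

definition R_minus :: "real set \<Rightarrow> real set \<Rightarrow> real set" where
  "R_minus B C = {circ_sub c (smaller_nb B c) | c. c \<in> C}"

definition R_plus :: "real set \<Rightarrow> real set \<Rightarrow> real set" where
  "R_plus B C = {circ_sub c (larger_nb B c) | c. c \<in> C}"

definition nat_span :: "real set \<Rightarrow> real set" where
  "nat_span R = {frac (\<Sum>r\<in>R. real (n r) * r) | n :: real \<Rightarrow> nat. True}"

end

theory Submission
  imports Defs
begin

lemma frac_inj01:
  assumes "x \<in> {0..<1}" "y \<in> {0..<1}" "frac (x - c) = frac (y - c)"
  shows "x = y"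
proof -
  have "frac ((x - c) - (y - c)) = 0" using assms(3) frac_diff_eq by metis
  hence "frac x = frac y" using frac_diff_zero by simp
  thus ?thesis using assms by simp
qed

lemma min_unique:
  fixes g :: "real \<Rightarrow> real"
  assumes "finite B" "B \<noteq> {}" "inj_on g B"
  shows "(THE b. b \<in> B \<and> (\<forall>b'\<in>B. g b \<le> g b')) \<in> B \<and>
     (\<forall>b'\<in>B. g (THE b. b \<in> B \<and> (\<forall>b'\<in>B. g b \<le> g b')) \<le> g b')"
proof -
  have "Min (g ` B) \<in> g ` B" using assms by simp
  then obtain b where b: "b \<in> B" "g b = Min (g ` B)" by (metis imageE)
  have bm: "\<forall>b'\<in>B. g b \<le> g b'" using b assms by simp
  have "\<exists>!b. b \<in> B \<and> (\<forall>b'\<in>B. g b \<le> g b')"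
  proof (rule ex1I[of _ b])
    show "b \<in> B \<and> (\<forall>b'\<in>B. g b \<le> g b')" using b bm by simp
  next
    fix x assume "x \<in> B \<and> (\<forall>b'\<in>B. g x \<le> g b')"
    hence "g x = g b" using b bm by force
    thus "x = b" using assms(3) b \<open>x \<in> B \<and> _\<close> by (meson inj_onD)
  qed
  from theI'[OF this] show ?thesis .
qed

lemma gap_up_inj:
  assumes "B \<subseteq> {0..<1}" "c \<in> {0..<1}"
  shows "inj_on (gap_up c) B"
proof (rule inj_onI)
  fix x y assume xy: "x \<in> B" "y \<in> B" "gap_up c x = gap_up c y"
  show "x = y"
  proof (cases "x = c \<or> y = c")
    case True
    thus ?thesis using xy frac_lt_1 unfolding gap_up_def
      by (metis less_irrefl)
  next
    case False
    hence "frac (x - c) = frac (y - c)" using xy unfolding gap_up_def by simp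
    moreover have "x \<in> {0..<1}" "y \<in> {0..<1}" using xy assms by auto
    ultimately show ?thesis using frac_inj01 by blast
  qed
qed

lemma gap_down_inj:
  assumes "B \<subseteq> {0..<1}" "c \<in> {0..<1}"
  shows "inj_on (gap_down c) B"
proof (rule inj_onI)
  fix x y assume xy: "x \<in> B" "y \<in> B" "gap_down c x = gap_down c y"
  show "x = y"
  proof (cases "x = c \<or> y = c")
    case True
    thus ?thesis using xy frac_lt_1 unfolding gap_down_def
      by (metis less_irrefl)
  next
    case False
    hence "frac (-(x - c)) = frac (-(y - c))" using xy unfolding gap_down_def by simp
    hence "frac (x - c) = frac (y - c)" using frac_neg_eq_iff by blast
    moreover have "x \<in> {0..<1}" "y \<in> {0..<1}" using xy assms by auto
    ultimately show ?thesis using frac_inj01 by blast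
  qed
qed

lemma span_intro:
  "x = frac (\<Sum>r\<in>R. real (n r) * r) \<Longrightarrow> x \<in> nat_span R"
  unfolding nat_span_def mem_Collect_eq by (rule exI[of _ n]) simp

lemma span_zero: "0 \<in> nat_span R"
proof -
  have "0 = frac (\<Sum>r\<in>R. real ((\<lambda>_. 0::nat) r) * r)" by simp
  thus ?thesis by (rule span_intro)
qed

lemma span_add:
  assumes "x \<in> nat_span R" "y \<in> nat_span R"
  shows "frac (x + y) \<in> nat_span R"
proof -
  obtain n where n: "x = frac (\<Sum>r\<in>R. real (n r) * r)" using assms(1) unfolding nat_span_def by auto
  obtain m where m: "y = frac (\<Sum>r\<in>R. real (m r) * r)" using assms(2) unfolding nat_span_def by auto
  have "frac (x + y) = frac ((\<Sum>r\<in>R. real (n r) * r) + (\<Sum>r\<in>R. real (m r) * r))"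
    using n m by simp
  also have "\<dots> = frac (\<Sum>r\<in>R. real (n r + m r) * r)"
    by (simp add: sum.distrib[symmetric] distrib_right)
  finally show ?thesis by (rule span_intro)
qed

lemma span_elem:
  assumes "finite R" "R \<subseteq> {0..<1}" "r \<in> R"
  shows "r \<in> nat_span R"
proof -
  have "(\<Sum>t\<in>R. real (if t = r then 1 else 0) * t) = (\<Sum>t\<in>R. if t = r then r else 0)"
    by (rule sum.cong) auto
  also have "\<dots> = r" using assms by simp
  finally have "(\<Sum>t\<in>R. real (if t = r then 1 else 0) * t) = r" .
  hence "r = frac (\<Sum>t\<in>R. real (if t = r then 1 else 0) * t)" using assms by auto
  thus ?thesis by (rule span_intro)
qed

lemma span_01: "nat_span R \<subseteq> {0..<1}"
  unfolding nat_span_def using frac_lt_1 by auto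

lemma span_mult:
  assumes "x \<in> nat_span R"
  shows "frac (real k * x) \<in> nat_span R"
proof (induction k)
  case 0 thus ?case using span_zero by simp
next
  case (Suc k)
  have "frac (real (Suc k) * x) = frac (frac (real k * x) + x)" by (simp add: algebra_simps)
  thus ?case using span_add[OF Suc assms] by simp
qed

lemma span_mono:
  assumes "finite R'" "R' \<subseteq> nat_span S"
  shows "frac (\<Sum>r\<in>R'. real (n r) * r) \<in> nat_span S"
  using assms
proof (induction R' rule: finite_induct)
  case empty thus ?case using span_zero by simp
next
  case (insert a F)
  have "frac (\<Sum>r\<in>insert a F. real (n r) * r) = frac (frac (real (n a) * a) + frac (\<Sum>r\<in>F. real (n r) * r))"
    using insert by simp
  thus ?case using span_add[OF span_mult insert.IH] insert.prems by auto
qed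

lemma span_sub:
  assumes "finite R" "R \<subseteq> nat_span S"
  shows "nat_span R \<subseteq> nat_span S"
  using span_mono[OF assms] unfolding nat_span_def[of R] by auto

lemma meas_induct:
  fixes \<mu> :: "real \<Rightarrow> real"
  assumes "finite D"
    and step: "\<And>d. d \<in> D \<Longrightarrow> (\<And>d'. d' \<in> D \<Longrightarrow> \<mu> d' < \<mu> d \<Longrightarrow> P d') \<Longrightarrow> P d"
  shows "d \<in> D \<Longrightarrow> P d"
proof (induction "card {x\<in>D. \<mu> x < \<mu> d}" arbitrary: d rule: less_induct)
  case less
  show ?case
  proof (rule step[OF less.prems])
    fix d' assume d': "d' \<in> D" "\<mu> d' < \<mu> d"
    have "{x\<in>D. \<mu> x < \<mu> d'} \<subset> {x\<in>D. \<mu> x < \<mu> d}" using d' by auto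
    hence "card {x\<in>D. \<mu> x < \<mu> d'} < card {x\<in>D. \<mu> x < \<mu> d}"
      using assms(1) by (intro psubset_card_mono) auto
    thus "P d'" using less.hyps d' by blast
  qed
qed

theorem theorem2:
  fixes B C :: "real set"
  assumes "finite B" and "B \<noteq> {}" and "B \<subseteq> {0..<1}"
    and "C \<subseteq> B"
    and "circ_setdiff C B = circ_setdiff B B"
  shows "circ_setdiff B B \<subseteq> nat_span (R_minus B C)
     \<and> circ_setdiff B B \<subseteq> nat_span (R_plus B C)
     \<and> nat_span (R_minus B C) = nat_span (R_plus B C)"
proof -
  define D where "D = circ_setdiff B B"
  have Deq: "D = (\<lambda>(x,y). circ_sub x y) ` (B \<times> B)"
    unfolding D_def circ_setdiff_def by auto
  have finD: "finite D" unfolding Deq using assms(1) by simp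
  have finC: "finite C" using assms(1,4) finite_subset by blast
  have finRm: "finite (R_minus B C)" unfolding R_minus_def using finC by simp
  have finRp: "finite (R_plus B C)" unfolding R_plus_def using finC by simp
  have Rm01: "R_minus B C \<subseteq> {0..<1}" unfolding R_minus_def circ_sub_def using frac_lt_1 by auto
  have Rp01: "R_plus B C \<subseteq> {0..<1}" unfolding R_plus_def circ_sub_def using frac_lt_1 by auto
  have DC: "\<exists>c b. c \<in> C \<and> b \<in> B \<and> d = frac (c - b)" if "d \<in> D" for d
  proof -
    have "d \<in> circ_setdiff C B" using that assms(5) D_def by simp
    thus ?thesis unfolding circ_setdiff_def circ_sub_def by auto
  qed
  have inD: "frac (x - y) \<in> D" if "x \<in> B" "y \<in> B" for x y
    unfolding Deq circ_sub_def using that by force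
  have nb_minus: "smaller_nb B c \<in> B \<and> (\<forall>b'\<in>B. gap_down c (smaller_nb B c) \<le> gap_down c b')"
    if "c \<in> C" for c
  proof -
    have "c \<in> {0..<1}" using that assms(3,4) by auto
    from min_unique[OF assms(1,2) gap_down_inj[OF assms(3) this]]
    show ?thesis unfolding smaller_nb_def .
  qed
  have nb_plus: "larger_nb B c \<in> B \<and> (\<forall>b'\<in>B. gap_up c (larger_nb B c) \<le> gap_up c b')"
    if "c \<in> C" for c
  proof -
    have "c \<in> {0..<1}" using that assms(3,4) by auto
    from min_unique[OF assms(1,2) gap_up_inj[OF assms(3) this]]
    show ?thesis unfolding larger_nb_def .
  qed
  have part1: "\<forall>d\<in>D. d \<in> nat_span (R_minus B C)"
  proof
    fix d0 assume "d0 \<in> D"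
    then show "d0 \<in> nat_span (R_minus B C)"
    proof (induction rule: meas_induct[OF finD, where \<mu>="\<lambda>x. x"])
      case (1 d)
      show ?case
      proof (cases "d = 0")
        case True thus ?thesis using span_zero by simp
      next
        case False
        obtain c b where cb: "c \<in> C" "b \<in> B" "d = frac (c - b)" using DC[OF 1(1)] by blast
        have c01: "c \<in> {0..<1}" "b \<in> {0..<1}" using cb assms(3,4) by auto
        have cnb: "c \<noteq> b"
        proof
          assume "c = b" hence "d = 0" using cb by simp
          thus False using False by simp
        qed
        define s where "s = smaller_nb B c"
        have s: "s \<in> B" "gap_down c s \<le> gap_down c b" using nb_minus[OF cb(1)] cb s_def by auto
        have gb: "gap_down c b = d" using cb cnb unfolding gap_down_def by simp
        have s01: "s \<in> {0..<1}" using s assms(3) by auto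
        have snc: "s \<noteq> c"
        proof
          assume "s = c" hence "gap_down c s = 1" unfolding gap_down_def by simp
          hence "1 \<le> d" using s(2) gb by simp
          thus False using cb(3) frac_lt_1[of "c - b"] by simp
        qed
        define r where "r = frac (c - s)"
        have rg: "gap_down c s = r" using snc unfolding gap_down_def r_def by simp
        have rpos: "r > 0"
        proof -
          have "r \<noteq> 0"
          proof
            assume "r = 0"
            hence "frac (c - s) = frac (s - s)" unfolding r_def by simp
            thus False using frac_inj01[OF c01(1) s01, of s] snc by simp
          qed
          thus ?thesis unfolding r_def using frac_ge_0 by (metis order_le_less)
        qed
        have rR: "r \<in> R_minus B C" unfolding R_minus_def circ_sub_def r_def s_def using cb by blast
        define d' where "d' = frac (s - b)"
        have d'D: "d' \<in> D" unfolding d'_def using inD s cb by simp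
        have "d' = frac ((c - b) - (c - s))" unfolding d'_def by simp
        also have "\<dots> = frac (c - b) - frac (c - s)"
          by (rule frac_diff_pos) (use s rg gb cb r_def in simp)
        also have "\<dots> = d - r" using cb r_def by simp
        finally have "d' < d" using rpos by simp
        hence IH: "d' \<in> nat_span (R_minus B C)" using 1(2) d'D by blast
        have "frac (r + d') = frac ((c - s) + (s - b))" unfolding r_def d'_def by simp
        also have "\<dots> = d" using cb by simp
        finally show ?thesis using span_add[OF span_elem[OF finRm Rm01 rR] IH] by simp
      qed
    qed (rule \<open>d0 \<in> D\<close>)
  qed
  have part2: "\<forall>d\<in>D. d \<in> nat_span (R_plus B C)"
  proof
    fix d0 assume "d0 \<in> D"
    then show "d0 \<in> nat_span (R_plus B C)"
    proof (induction rule: meas_induct[OF finD, where \<mu>="\<lambda>x. frac (- x)"])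
      case (1 d)
      show ?case
      proof (cases "d = 0")
        case True thus ?thesis using span_zero by simp
      next
        case False
        obtain c b where cb: "c \<in> C" "b \<in> B" "d = frac (c - b)" using DC[OF 1(1)] by blast
        have c01: "c \<in> {0..<1}" "b \<in> {0..<1}" using cb assms(3,4) by auto
        have cnb: "c \<noteq> b"
        proof
          assume "c = b" hence "d = 0" using cb by simp
          thus False using False by simp
        qed
        define p where "p = larger_nb B c"
        have p: "p \<in> B" "gap_up c p \<le> gap_up c b" using nb_plus[OF cb(1)] cb p_def by auto
        define g where "g = frac (b - c)"
        have gd: "g = frac (- d)" unfolding g_def cb(3) frac_neg_frac by simp
        have gb: "gap_up c b = g" using cb cnb unfolding gap_up_def g_def by simp
        have p01: "p \<in> {0..<1}" using p assms(3) by auto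
        have pnc: "p \<noteq> c"
        proof
          assume "p = c" hence "gap_up c p = 1" unfolding gap_up_def by simp
          hence "1 \<le> g" using p(2) gb by simp
          thus False using g_def frac_lt_1[of "b - c"] by simp
        qed
        define u where "u = frac (p - c)"
        have ug: "gap_up c p = u" using pnc unfolding gap_up_def u_def by simp
        have upos: "u > 0"
        proof -
          have "u \<noteq> 0"
          proof
            assume "u = 0"
            hence "frac (p - c) = frac (c - c)" unfolding u_def by simp
            thus False using frac_inj01[OF p01 c01(1), of c] pnc by simp
          qed
          thus ?thesis unfolding u_def using frac_ge_0 by (metis order_le_less)
        qed
        define r where "r = frac (c - p)"
        have rR: "r \<in> R_plus B C" unfolding R_plus_def circ_sub_def r_def p_def using cb by blast
        define d' where "d' = frac (p - b)"
        have d'D: "d' \<in> D" unfolding d'_def using inD p cb by simp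
        have "frac (- d') = frac (b - p)" unfolding d'_def frac_neg_frac by simp
        also have "\<dots> = frac ((b - c) - (p - c))" by simp
        also have "\<dots> = frac (b - c) - frac (p - c)"
          by (rule frac_diff_pos) (use p ug gb g_def u_def in simp)
        also have "\<dots> = g - u" using g_def u_def by simp
        finally have "frac (- d') < frac (- d)" using upos gd by simp
        hence IH: "d' \<in> nat_span (R_plus B C)" using 1(2) d'D by blast
        have "frac (r + d') = frac ((c - p) + (p - b))" unfolding r_def d'_def by simp
        also have "\<dots> = d" using cb by simp
        finally show ?thesis using span_add[OF span_elem[OF finRp Rp01 rR] IH] by simp
      qed
    qed (rule \<open>d0 \<in> D\<close>)
  qed
  have RmD: "R_minus B C \<subseteq> D"
  proof
    fix r assume "r \<in> R_minus B C"
    then obtain c where c: "c \<in> C" "r = circ_sub c (smaller_nb B c)" unfolding R_minus_def by auto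
    thus "r \<in> D" using inD[of c "smaller_nb B c"] nb_minus[OF c(1)] assms(4) unfolding circ_sub_def by auto
  qed
  have RpD: "R_plus B C \<subseteq> D"
  proof
    fix r assume "r \<in> R_plus B C"
    then obtain c where c: "c \<in> C" "r = circ_sub c (larger_nb B c)" unfolding R_plus_def by auto
    thus "r \<in> D" using inD[of c "larger_nb B c"] nb_plus[OF c(1)] assms(4) unfolding circ_sub_def by auto
  qed
  have e1: "nat_span (R_minus B C) \<subseteq> nat_span (R_plus B C)"
    using RmD part2 by (intro span_sub[OF finRm]) blast
  have e2: "nat_span (R_plus B C) \<subseteq> nat_span (R_minus B C)"
    using RpD part1 by (intro span_sub[OF finRp]) blast
  have "D \<subseteq> nat_span (R_minus B C)" "D \<subseteq> nat_span (R_plus B C)" using part1 part2 by auto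
  thus ?thesis using e1 e2 unfolding D_def by auto
qed

end
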